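(* For every $\lambda\in\mathbb{C}$, $$\det\left(\mathbf{P}_2^{-1}\mathbf{K}-\lambda I_{2m+n}\right)=(1-\lambda)^{2m}\det\left(B^{-1}H-\lambda I_n\right).$$ Consequently $\mathbf{P}_2^{-1}\mathbf{K}$ has the same eigenvalues (with algebraic multiplicities) as $\mathbf{P}_4^{-1}\mathbf{K}$: the value $1$ with multiplicity (at least) $2m$ together with the eigenvalues of $B^{-1}H$.
   Context: Let $m,n\ge 1$. Let $R_u\in\mathbb{R}^{m\times m}$ be invertible, $R_z\in\mathbb{R}^{m\times n}$, $L_{uu}\in\mathbb{R}^{m\times m}$ symmetric, $L_{uz}\in\mathbb{R}^{m\times n}$, $L_{zu}:=L_{uz}^T$, $L_{zz}\in\mathbb{R}^{n\times n}$ symmetric, and $B\in\mathbb{R}^{n\times n}$ invertible. Write $R_u^{-T}:=(R_u^{-1})^T$. Define the reduced Hessian $H:=L_{zz}-L_{zu}R_u^{-1}R_z-R_z^TR_u^{-T}L_{uz}+R_z^TR_u^{-T}L_{uu}R_u^{-1}R_z$. The KKT matrix is $\mathbf{K}:=\begin{bmatrix} L_{uu} & L_{uz} & R_u^T\\ L_{zu} & L_{zz} & R_z^T\\ R_u & R_z & 0\end{bmatrix}$ and $\mathbf{P}_2:=\begin{bmatrix} 0 & 0 & R_u^T\\ 0 & B & R_z^T\\ R_u & R_z & 0\end{bmatrix}$. $\mathbf{P}_4:=\mathbf{K}_1\mathbf{K}_2$ with $\mathbf{K}_1=\begin{bmatrix} L_{uu}R_u^{-1} & 0 & I_m\\ L_{zu}R_u^{-1}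 & I_n & R_z^TR_u^{-T}\\ I_m & 0 & 0\end{bmatrix}$, $\mathbf{K}_2=\begin{bmatrix} R_u & R_z & 0\\ 0 & B & 0\\ 0 & L_{uz}-L_{uu}R_u^{-1}R_z & R_u^T\end{bmatrix}$. *)

theory Defs
  imports "Jordan_Normal_Form.Determinant" "Jordan_Normal_Form.Char_Poly"
begin

text \<open>Two-sided inverse of a square matrix (arbitrary if none exists).\<close>
definition minv :: "'a :: comm_ring_1 mat \<Rightarrow> 'a mat" where
  "minv A = (SOME C. C \<in> carrier_mat (dim_row A) (dim_row A) \<and>
               A * C = 1\<^sub>m (dim_row A) \<and> C * A = 1\<^sub>m (dim_row A))"

text \<open>3 x 3 block matrix [[A11 A12 A13];[A21 A22 A23];[A31 A32 A33]].\<close>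
definition block3 :: "'a :: zero mat \<Rightarrow> 'a mat \<Rightarrow> 'a mat \<Rightarrow> 'a mat \<Rightarrow> 'a mat \<Rightarrow> 'a mat
    \<Rightarrow> 'a mat \<Rightarrow> 'a mat \<Rightarrow> 'a mat \<Rightarrow> 'a mat" where
  "block3 A11 A12 A13 A21 A22 A23 A31 A32 A33 =
     four_block_mat (four_block_mat A11 A12 A21 A22)
       (four_block_mat A13 (0\<^sub>m (dim_row A13) 0) A23 (0\<^sub>m (dim_row A23) 0))
       (four_block_mat A31 A32 (0\<^sub>m 0 (dim_col A31)) (0\<^sub>m 0 (dim_col A32)))
       A33"

abbreviation cmat :: "real mat \<Rightarrow> complex mat" where
  "cmat A \<equiv> map_mat complex_of_real A"

end

theory Submission
  imports Defs
begin


lemma minv_props: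
  fixes A :: "'a::field mat"
  assumes A: "A \<in> carrier_mat n n" and C: "C \<in> carrier_mat n n" and AC: "A * C = 1\<^sub>m n"
  shows "minv A \<in> carrier_mat n n" "A * minv A = 1\<^sub>m n" "minv A * A = 1\<^sub>m n"
proof -
  have CA: "C * A = 1\<^sub>m n" by (rule mat_mult_left_right_inverse[OF A C AC])
  have dr: "dim_row A = n" using A by auto
  have ex: "\<exists>C. C \<in> carrier_mat (dim_row A) (dim_row A) \<and> A * C = 1\<^sub>m (dim_row A) \<and> C * A = 1\<^sub>m (dim_row A)"
    using C AC CA dr by auto
  from someI_ex[OF ex] dr show "minv A \<in> carrier_mat n n" "A * minv A = 1\<^sub>m n" "minv A * A = 1\<^sub>m n"
    unfolding minv_def by auto
qed

lemma invertible_right_inv: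
  fixes A :: "'a::field mat"
  assumes A: "A \<in> carrier_mat n n" and inv: "invertible_mat A"
  shows "\<exists>C. C \<in> carrier_mat n n \<and> A * C = 1\<^sub>m n"
proof -
  from inv obtain B where AB: "A * B = 1\<^sub>m (dim_row A)" and BA: "B * A = 1\<^sub>m (dim_row B)"
    unfolding invertible_mat_def inverts_mat_def by auto
  have "dim_col B = n" using AB A by (metis carrier_matD(1) index_mult_mat(3) index_one_mat(3))
  moreover have "dim_row B = n" using BA A by (metis carrier_matD(2) index_mult_mat(3) index_one_mat(3))
  ultimately show ?thesis using AB A by (intro exI[of _ B]) auto
qed

lemma block3_carrier[simp]:
  assumes "A11 \<in> carrier_mat r1 c1" "A22 \<in> carrier_mat r2 c2" "A33 \<in> carrier_mat r3 c3"
  shows "block3 A11 A12 A13 A21 A22 A23 A31 A32 A33 \<in> carrier_mat (r1+r2+r3) (c1+c2+c3)"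
  using assms unfolding block3_def by (intro four_block_carrier_mat) auto

lemma mat_r0: "(X::'a::zero mat) \<in> carrier_mat r 0 \<Longrightarrow> X = 0\<^sub>m r 0"
  by (rule eq_matI) auto
lemma mat_0c: "(X::'a::zero mat) \<in> carrier_mat 0 c \<Longrightarrow> X = 0\<^sub>m 0 c"
  by (rule eq_matI) auto

lemma four_block_triv: "X \<in> carrier_mat r c \<Longrightarrow> Y = 0\<^sub>m r 0 \<Longrightarrow> Z \<in> carrier_mat 0 c \<Longrightarrow> U \<in> carrier_mat 0 0 \<Longrightarrow> four_block_mat X Y Z U = X"
  by (rule eq_matI) auto

lemma block3_mult:
  fixes A11 :: "'a::comm_ring_1 mat"
  assumes a: "A11 \<in> carrier_mat r1 k1" "A12 \<in> carrier_mat r1 k2" "A13 \<in> carrier_mat r1 k3"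
    "A21 \<in> carrier_mat r2 k1" "A22 \<in> carrier_mat r2 k2" "A23 \<in> carrier_mat r2 k3"
    "A31 \<in> carrier_mat r3 k1" "A32 \<in> carrier_mat r3 k2" "A33 \<in> carrier_mat r3 k3"
  and b: "B11 \<in> carrier_mat k1 c1" "B12 \<in> carrier_mat k1 c2" "B13 \<in> carrier_mat k1 c3"
    "B21 \<in> carrier_mat k2 c1" "B22 \<in> carrier_mat k2 c2" "B23 \<in> carrier_mat k2 c3"
    "B31 \<in> carrier_mat k3 c1" "B32 \<in> carrier_mat k3 c2" "B33 \<in> carrier_mat k3 c3"
  shows "block3 A11 A12 A13 A21 A22 A23 A31 A32 A33 * block3 B11 B12 B13 B21 B22 B23 B31 B32 B33
   = block3 (A11*B11 + A12*B21 + A13*B31) (A11*B12 + A12*B22 + A13*B32) (A11*B13 + A12*B23 + A13*B33)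
            (A21*B11 + A22*B21 + A23*B31) (A21*B12 + A22*B22 + A23*B32) (A21*B13 + A22*B23 + A23*B33)
            (A31*B11 + A32*B21 + A33*B31) (A31*B12 + A32*B22 + A33*B32) (A31*B13 + A32*B23 + A33*B33)"
proof -
  let ?X11 = "four_block_mat A11 A12 A21 A22"
  let ?X12 = "four_block_mat A13 (0\<^sub>m r1 0) A23 (0\<^sub>m r2 0)"
  let ?X21 = "four_block_mat A31 A32 (0\<^sub>m 0 k1) (0\<^sub>m 0 k2)"
  let ?Y11 = "four_block_mat B11 B12 B21 B22"
  let ?Y12 = "four_block_mat B13 (0\<^sub>m k1 0) B23 (0\<^sub>m k2 0)"
  let ?Y21 = "four_block_mat B31 B32 (0\<^sub>m 0 c1) (0\<^sub>m 0 c2)"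
  have c: "?X11 \<in> carrier_mat (r1+r2) (k1+k2)" "?X12 \<in> carrier_mat (r1+r2) k3"
    "?X21 \<in> carrier_mat r3 (k1+k2)" "?Y11 \<in> carrier_mat (k1+k2) (c1+c2)"
    "?Y12 \<in> carrier_mat (k1+k2) c3" "?Y21 \<in> carrier_mat k3 (c1+c2)"
    using a b by (auto intro!: four_block_carrier_mat[of _ _ _ _ _ 0 _, simplified])
  have e1: "block3 A11 A12 A13 A21 A22 A23 A31 A32 A33 = four_block_mat ?X11 ?X12 ?X21 A33"
    using a unfolding block3_def by auto
  have e2: "block3 B11 B12 B13 B21 B22 B23 B31 B32 B33 = four_block_mat ?Y11 ?Y12 ?Y21 B33"
    using b unfolding block3_def by auto
  have m1: "four_block_mat ?X11 ?X12 ?X21 A33 * four_block_mat ?Y11 ?Y12 ?Y21 B33 =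
     four_block_mat (?X11 * ?Y11 + ?X12 * ?Y21) (?X11 * ?Y12 + ?X12 * B33)
      (?X21 * ?Y11 + A33 * ?Y21) (?X21 * ?Y12 + A33 * B33)"
    by (rule mult_four_block_mat) (use c a b in auto)
  have p1: "?X11 * ?Y11 = four_block_mat (A11*B11 + A12*B21) (A11*B12 + A12*B22) (A21*B11 + A22*B21) (A21*B12 + A22*B22)"
    by (rule mult_four_block_mat) (use a b in auto)
  have p2: "?X12 * ?Y21 = four_block_mat (A13*B31) (A13*B32) (A23*B31) (A23*B32)"
    by (subst mult_four_block_mat[of _ r1 k3 _ 0 _ r2 _ _ c1 _ c2]) (use a b in auto)
  have p3: "?X11 * ?Y12 = four_block_mat (A11*B13 + A12*B23) (0\<^sub>m r1 0) (A21*B13 + A22*B23) (0\<^sub>m r2 0)"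
    by (subst mult_four_block_mat[of _ r1 k1 _ k2 _ r2 _ _ c3 _ 0]) (use a b in auto)
  have p4: "?X12 * B33 = four_block_mat (A13*B33) (0\<^sub>m r1 0) (A23*B33) (0\<^sub>m r2 0)"
    by (rule eq_matI) (use a b in \<open>auto simp: scalar_prod_def\<close>)
  have p5: "?X21 * ?Y11 = four_block_mat (A31*B11 + A32*B21) (A31*B12 + A32*B22) (0\<^sub>m 0 c1) (0\<^sub>m 0 c2)"
    by (subst mult_four_block_mat[of _ r3 k1 _ k2 _ 0 _ _ c1 _ c2]) (use a b in auto)
  have p6: "A33 * ?Y21 = four_block_mat (A33*B31) (A33*B32) (0\<^sub>m 0 c1) (0\<^sub>m 0 c2)"
    by (rule eq_matI) (use a b in \<open>auto simp: scalar_prod_def\<close>)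
  have p7: "?X21 * ?Y12 = A31*B13 + A32*B23"
    apply (subst mult_four_block_mat[of _ r3 k1 _ k2 _ 0 _ _ c3 _ 0])
    using a b by (auto intro!: four_block_triv)
  have s1: "?X11 * ?Y11 + ?X12 * ?Y21 = four_block_mat (A11*B11 + A12*B21 + A13*B31) (A11*B12 + A12*B22 + A13*B32) (A21*B11 + A22*B21 + A23*B31) (A21*B12 + A22*B22 + A23*B32)"
    unfolding p1 p2 by (subst add_four_block_mat[of _ r1 c1 _ c2 _ r2]) (use a b in auto)
  have s2: "?X11 * ?Y12 + ?X12 * B33 = four_block_mat (A11*B13 + A12*B23 + A13*B33) (0\<^sub>m r1 0) (A21*B13 + A22*B23 + A23*B33) (0\<^sub>m r2 0)"
    unfolding p3 p4 by (subst add_four_block_mat[of _ r1 c3 _ 0 _ r2]) (use a b in auto)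
  have s3: "?X21 * ?Y11 + A33 * ?Y21 = four_block_mat (A31*B11 + A32*B21 + A33*B31) (A31*B12 + A32*B22 + A33*B32) (0\<^sub>m 0 c1) (0\<^sub>m 0 c2)"
    unfolding p5 p6 by (subst add_four_block_mat[of _ r3 c1 _ c2 _ 0]) (use a b in auto)
  show ?thesis unfolding e1 e2 m1 s1 s2 s3 p7 unfolding block3_def
    using a b by (auto intro!: cong_four_block_mat)
qed



lemma char_poly_one_mat: "char_poly (1\<^sub>m m :: 'a::comm_ring_1 mat) = [:-1,1:]^m"
proof -
  have "char_poly (1\<^sub>m m :: 'a mat) = (\<Prod> a \<leftarrow> diag_mat (1\<^sub>m m :: 'a mat). [:- a, 1:])"
    by (rule char_poly_upper_triangular[of _ m]) (auto simp: upper_triangular_def)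
  also have "diag_mat (1\<^sub>m m :: 'a mat) = replicate m 1"
    by (auto simp: diag_mat_def list_eq_iff_nth_eq)
  finally show ?thesis by (simp add: prod_list_replicate)
qed

lemma char_poly_block_ur0:
  fixes A :: "'a::idom mat"
  assumes A: "A \<in> carrier_mat n n" and C: "C \<in> carrier_mat k n" and D: "D \<in> carrier_mat k k"
  shows "char_poly (four_block_mat A (0\<^sub>m n k) C D) = char_poly A * char_poly D"
proof -
  have "char_poly_matrix (four_block_mat A (0\<^sub>m n k) C D) =
    four_block_mat (char_poly_matrix A) (0\<^sub>m n k) (map_mat (\<lambda> a. [: - a :]) C) (char_poly_matrix D)"
    by (rule eq_matI) (use A C D in \<open>auto simp: char_poly_matrix_def\<close>)
  thus ?thesis unfolding char_poly_def
    by (simp add: det_four_block_mat_upper_right_zero[of _ n _ k] A C D)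
qed

lemma char_poly_block_ll0:
  fixes A :: "'a::idom mat"
  assumes A: "A \<in> carrier_mat n n" and B: "B \<in> carrier_mat n k" and D: "D \<in> carrier_mat k k"
  shows "char_poly (four_block_mat A B (0\<^sub>m k n) D) = char_poly A * char_poly D"
proof -
  have "char_poly_matrix (four_block_mat A B (0\<^sub>m k n) D) =
    four_block_mat (char_poly_matrix A) (map_mat (\<lambda> a. [: - a :]) B) (0\<^sub>m k n) (char_poly_matrix D)"
    by (rule eq_matI) (use A B D in \<open>auto simp: char_poly_matrix_def\<close>)
  thus ?thesis unfolding char_poly_def
    by (simp add: det_four_block_mat_lower_left_zero[of _ n _ k] A B D)
qed

lemma block3_one: "block3 (1\<^sub>m a) (0\<^sub>m a b) (0\<^sub>m a c) (0\<^sub>m b a) (1\<^sub>m b) (0\<^sub>m b c) (0\<^sub>m c a) (0\<^sub>m c b) (1\<^sub>m c) = 1\<^sub>m (a+b+c)"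
  by (rule eq_matI) (auto simp: block3_def)



lemma char_poly_T_lower:
  fixes G :: "'a::idom mat"
  assumes G: "G \<in> carrier_mat n n" and T21: "T21 \<in> carrier_mat n m"
    and T31: "T31 \<in> carrier_mat m m" and T32: "T32 \<in> carrier_mat m n"
  shows "char_poly (block3 (1\<^sub>m m) (0\<^sub>m m n) (0\<^sub>m m m) T21 G (0\<^sub>m n m) T31 T32 (1\<^sub>m m))
     = [:-1,1:]^(2*m) * char_poly G"
proof -
  have e: "block3 (1\<^sub>m m) (0\<^sub>m m n) (0\<^sub>m m m) T21 G (0\<^sub>m n m) T31 T32 (1\<^sub>m m) =
    four_block_mat (four_block_mat (1\<^sub>m m) (0\<^sub>m m n) T21 G) (0\<^sub>m (m+n) m)
      (four_block_mat T31 T32 (0\<^sub>m 0 m) (0\<^sub>m 0 n)) (1\<^sub>m m)"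
    unfolding block3_def using four_block_zero_mat[of m m 0 n] assms by simp
  have c1: "four_block_mat (1\<^sub>m m) (0\<^sub>m m n) T21 G \<in> carrier_mat (m+n) (m+n)" using G by auto
  have c2: "four_block_mat T31 T32 (0\<^sub>m 0 m) (0\<^sub>m 0 n) \<in> carrier_mat m (m+n)"
    using four_block_carrier_mat[OF T31, of "0\<^sub>m 0 n" 0 n] by simp
  show ?thesis unfolding e
    by (simp add: char_poly_block_ur0[OF c1 c2] char_poly_block_ur0[OF _ T21 G] char_poly_one_mat
      power_add[symmetric] mult_2)
qed

lemma char_poly_T_upper:
  fixes G :: "'a::idom mat"
  assumes G: "G \<in> carrier_mat n n" and T12: "T12 \<in> carrier_mat m n"
    and T32: "T32 \<in> carrier_mat m n"
  shows "char_poly (block3 (1\<^sub>m m) T12 (0\<^sub>m m m) (0\<^sub>m n m) G (0\<^sub>m n m) (0\<^sub>m m m) T32 (1\<^sub>m m))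
     = [:-1,1:]^(2*m) * char_poly G"
proof -
  have e: "block3 (1\<^sub>m m) T12 (0\<^sub>m m m) (0\<^sub>m n m) G (0\<^sub>m n m) (0\<^sub>m m m) T32 (1\<^sub>m m) =
    four_block_mat (four_block_mat (1\<^sub>m m) T12 (0\<^sub>m n m) G) (0\<^sub>m (m+n) m)
      (four_block_mat (0\<^sub>m m m) T32 (0\<^sub>m 0 m) (0\<^sub>m 0 n)) (1\<^sub>m m)"
    unfolding block3_def using four_block_zero_mat[of m m 0 n] assms by simp
  have c1: "four_block_mat (1\<^sub>m m) T12 (0\<^sub>m n m) G \<in> carrier_mat (m+n) (m+n)" using G by auto
  have c2: "four_block_mat (0\<^sub>m m m) T32 (0\<^sub>m 0 m) (0\<^sub>m 0 n) \<in> carrier_mat m (m+n)"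
    using four_block_carrier_mat[OF zero_carrier_mat[of m m], of "0\<^sub>m 0 n" 0 n] by simp
  show ?thesis unfolding e
    by (simp add: char_poly_block_ur0[OF c1 c2] char_poly_block_ll0[OF _ T12 G] char_poly_one_mat
      power_add[symmetric] mult_2)
qed



lemma block3_cong: "A11 = B11 \<Longrightarrow> A12 = B12 \<Longrightarrow> A13 = B13 \<Longrightarrow> A21 = B21 \<Longrightarrow> A22 = B22 \<Longrightarrow> A23 = B23 \<Longrightarrow>
  A31 = B31 \<Longrightarrow> A32 = B32 \<Longrightarrow> A33 = B33 \<Longrightarrow> block3 A11 A12 A13 A21 A22 A23 A31 A32 A33 = block3 B11 B12 B13 B21 B22 B23 B31 B32 B33"
  by simp

lemma assoc_dim:
  fixes A :: "'a::semiring_0 mat"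
  assumes "dim_col A = dim_row B" "dim_col B = dim_row C"
  shows "A * B * C = A * (B * C)"
  by (rule assoc_mult_mat[of A "dim_row A" "dim_col A" B "dim_col B" C "dim_col C"]) (use assms in auto)

lemma cancel_dim:
  fixes A :: "'a::semiring_1 mat"
  assumes "A * B = 1\<^sub>m n" "A \<in> carrier_mat n n" "B \<in> carrier_mat n n" "dim_row X = n"
  shows "A * (B * X) = X"
proof -
  have X: "X \<in> carrier_mat n (dim_col X)" using assms(4) by auto
  have "A * (B * X) = (A * B) * X" using assms(2,3) X by simp
  also have "\<dots> = 1\<^sub>m n * X" using assms(1) by simp
  also have "\<dots> = X" using left_mult_one_mat[OF X] .
  finally show ?thesis .
qed

lemma det_shift:
  fixes A :: "'a::field mat"
  assumes A: "A \<in> carrier_mat N N"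
  shows "det (A - k \<cdot>\<^sub>m 1\<^sub>m N) = (-1)^N * poly (char_poly A) k"
proof -
  have e: "- (char_matrix A k) = (-1) \<cdot>\<^sub>m (A - k \<cdot>\<^sub>m 1\<^sub>m N)"
    by (rule eq_matI) (use A in \<open>auto simp: char_matrix_def\<close>)
  have "poly (char_poly A) k = (-1)^N * det (A - k \<cdot>\<^sub>m 1\<^sub>m N)"
    unfolding char_poly_matrix[OF A] e det_smult using A by simp
  hence "(-1)^N * poly (char_poly A) k = ((-1)^N * (-1)^N) * det (A - k \<cdot>\<^sub>m 1\<^sub>m N)" by simp
  also have "(-1)^N * (-1)^N = (1::'a)" by (simp flip: power_add add: power_even_eq[symmetric] mult_2[symmetric])
  finally show ?thesis by simp
qed

interpretation ofrp: map_poly_comm_ring_hom "of_real :: real \<Rightarrow> complex" ..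

theorem mainTheorem7:
  fixes m n :: nat
    and Ru Rz Luu Luz Lzz B :: "real mat"
  assumes "m \<ge> 1" and "n \<ge> 1"
    and Ru: "Ru \<in> carrier_mat m m" "invertible_mat Ru"
    and Rz: "Rz \<in> carrier_mat m n"
    and Luu: "Luu \<in> carrier_mat m m" "transpose_mat Luu = Luu"
    and Luz: "Luz \<in> carrier_mat m n"
    and Lzz: "Lzz \<in> carrier_mat n n" "transpose_mat Lzz = Lzz"
    and B: "B \<in> carrier_mat n n" "invertible_mat B"
  defines "Lzu \<equiv> transpose_mat Luz"
    and "RuiT \<equiv> transpose_mat (minv Ru)"
  defines "H \<equiv> Lzz - Lzu * minv Ru * Rz - transpose_mat Rz * RuiT * Luz
                + transpose_mat Rz * RuiT * Luu * minv Ru * Rz"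
    and "K \<equiv> block3 Luu Luz (transpose_mat Ru)
                    Lzu Lzz (transpose_mat Rz)
                    Ru Rz (0\<^sub>m m m)"
    and "P2 \<equiv> block3 (0\<^sub>m m m) (0\<^sub>m m n) (transpose_mat Ru)
                     (0\<^sub>m n m) B (transpose_mat Rz)
                     Ru Rz (0\<^sub>m m m)"
    and "K1 \<equiv> block3 (Luu * minv Ru) (0\<^sub>m m n) (1\<^sub>m m)
                     (Lzu * minv Ru) (1\<^sub>m n) (transpose_mat Rz * RuiT)
                     (1\<^sub>m m) (0\<^sub>m m n) (0\<^sub>m m m)"
    and "K2 \<equiv> block3 Ru Rz (0\<^sub>m m m)
                     (0\<^sub>m n m) B (0\<^sub>m n m)
                     (0\<^sub>m m m) (Luz - Luu * minv Ru * Rz) (transpose_mat Ru)"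
  defines "P4 \<equiv> K1 * K2"
  shows "(\<forall>lam::complex.
            det (cmat (minv P2 * K) - lam \<cdot>\<^sub>m 1\<^sub>m (2*m+n))
            = (1 - lam) ^ (2*m) * det (cmat (minv B * H) - lam \<cdot>\<^sub>m 1\<^sub>m n))
       \<and> char_poly (cmat (minv P2 * K)) = char_poly (cmat (minv P4 * K))
       \<and> char_poly (cmat (minv P2 * K)) = [:-1, 1:] ^ (2*m) * char_poly (cmat (minv B * H))"
proof -
  obtain Ri where Ri_def: "Ri = minv Ru" by auto
  obtain Bi where Bi_def: "Bi = minv B" by auto
  from invertible_right_inv[OF Ru] obtain C where "C \<in> carrier_mat m m" "Ru * C = 1\<^sub>m m" by auto
  from minv_props[OF Ru(1) this] have Ri[simp]: "Ri \<in> carrier_mat m m" and RuRi[simp]: "Ru * Ri = 1\<^sub>m m"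
    and RiRu[simp]: "Ri * Ru = 1\<^sub>m m" unfolding Ri_def by auto
  from invertible_right_inv[OF B] obtain C where "C \<in> carrier_mat n n" "B * C = 1\<^sub>m n" by auto
  from minv_props[OF B(1) this] have Bi[simp]: "Bi \<in> carrier_mat n n" and BBi[simp]: "B * Bi = 1\<^sub>m n"
    and BiB[simp]: "Bi * B = 1\<^sub>m n" unfolding Bi_def by auto
  have RiT_def: "RuiT = transpose_mat Ri" unfolding RuiT_def Ri_def ..
  have RiT[simp]: "RuiT \<in> carrier_mat m m" unfolding RiT_def by simp
  have RuTRiT[simp]: "transpose_mat Ru * RuiT = 1\<^sub>m m" unfolding RiT_def
    using transpose_mult[OF Ri Ru(1)] by simp
  have RiTRuT[simp]: "RuiT * transpose_mat Ru = 1\<^sub>m m" unfolding RiT_def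
    using transpose_mult[OF Ru(1) Ri] by simp
  have Lzu[simp]: "Lzu \<in> carrier_mat n m" unfolding Lzu_def using Luz by simp
  note [simp] = Ru(1) Rz Luu Luz Lzz B(1)
  have H[simp]: "H \<in> carrier_mat n n" unfolding H_def Ri_def[symmetric]
    using carrier_matD[OF Lzz(1)] carrier_matD[OF Lzu] carrier_matD[OF Rz] carrier_matD[OF Ri]
     carrier_matD[OF RiT] carrier_matD[OF Luu(1)] carrier_matD[OF Luz]
    by (intro carrier_matI) (simp_all only: index_mult_mat index_add_mat index_minus_mat index_transpose_mat)
  note dims = carrier_matD[OF Lzz(1)] carrier_matD[OF Lzu] carrier_matD[OF Rz] carrier_matD[OF Ri]
     carrier_matD[OF RiT] carrier_matD[OF Luu(1)] carrier_matD[OF Luz] carrier_matD[OF Ru(1)] carrier_matD[OF B(1)]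
     carrier_matD[OF Bi] carrier_matD[OF H]
  define W where "W = Ri * Rz"
  define WT where "WT = transpose_mat Rz * RuiT"
  have W[simp]: "W \<in> carrier_mat m n" and WT[simp]: "WT \<in> carrier_mat n m" unfolding W_def WT_def
    using dims by (auto intro!: carrier_matI)
  note dims = dims carrier_matD[OF W] carrier_matD[OF WT]
  define G where "G = Bi * H"
  have G[simp]: "G \<in> carrier_mat n n" unfolding G_def using dims by (auto intro!: carrier_matI)
  note dims = dims carrier_matD[OF G]
  define S where "S = block3 (1\<^sub>m m) (- W) (0\<^sub>m m m) (0\<^sub>m n m) (1\<^sub>m n) (0\<^sub>m n m) (0\<^sub>m m m) (0\<^sub>m m n) (1\<^sub>m m)"
  define KS where "KS = block3 Luu (Luz - Luu * W) (transpose_mat Ru) Lzu (Lzz - Lzu * W) (transpose_mat Rz) Ru (0\<^sub>m m n) (0\<^sub>m m m)"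
  have ec[simp]: "Bi * (Lzu - WT * Luu) \<in> carrier_mat n m" "RuiT * Luu \<in> carrier_mat m m"
    "RuiT * (Luz - Luu * W) \<in> carrier_mat m n" "Bi * WT \<in> carrier_mat n m"
    using dims by (auto intro!: carrier_matI)
  note bm = block3_mult[of _ m m _ n _ m _ n _ _ _ m _ _ _ m _ n _ m]
  have RuT[simp]: "transpose_mat Ru \<in> carrier_mat m m" by simp
  note canc = cancel_dim[OF RuRi Ru(1) Ri] cancel_dim[OF RiRu Ri Ru(1)] cancel_dim[OF BBi B(1) Bi]
    cancel_dim[OF BiB Bi B(1)] cancel_dim[OF RuTRiT RuT RiT] cancel_dim[OF RiTRuT RiT]
  have RuW: "Ru * W = Rz" unfolding W_def using dims canc by simp
  have RzT[simp]: "transpose_mat Rz \<in> carrier_mat n m" by simp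
  have BG: "B * G = H" unfolding G_def using canc dims by simp
  have e3: "Lzu - WT * Luu + transpose_mat Rz * (RuiT * Luu) = Lzu"
  proof -
    have "WT * Luu = transpose_mat Rz * (RuiT * Luu)" unfolding WT_def
      by (rule assoc_mult_mat[OF RzT RiT Luu(1)])
    thus ?thesis by (auto intro!: eq_matI simp: dims)
  qed
  have e4: "H + transpose_mat Rz * (RuiT * (Luz - Luu * W)) = Lzz - Lzu * W"
  proof -
    have a1: "transpose_mat Rz * (RuiT * (Luz - Luu * W)) = transpose_mat Rz * (RuiT * Luz) - transpose_mat Rz * (RuiT * (Luu * W))"
    proof -
      have c0: "Luu * W \<in> carrier_mat m n" "RuiT * Luz \<in> carrier_mat m n" "RuiT * (Luu * W) \<in> carrier_mat m n"
        using dims by (auto intro!: carrier_matI)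
      show ?thesis unfolding mult_minus_distrib_mat[OF RiT Luz c0(1)] mult_minus_distrib_mat[OF RzT c0(2,3)] ..
    qed
    have a2: "H = Lzz - Lzu * W - transpose_mat Rz * (RuiT * Luz) + transpose_mat Rz * (RuiT * (Luu * W))"
      unfolding H_def W_def Ri_def[symmetric] using dims by (simp add: assoc_dim)
    show ?thesis unfolding a1 a2 by (auto intro!: eq_matI simp: dims)
  qed
  define Sinv where "Sinv = block3 (1\<^sub>m m) W (0\<^sub>m m m) (0\<^sub>m n m) (1\<^sub>m n) (0\<^sub>m n m) (0\<^sub>m m m) (0\<^sub>m m n) (1\<^sub>m m)"
  define T where "T = block3 (1\<^sub>m m) (0\<^sub>m m n) (0\<^sub>m m m) (Bi * (Lzu - WT * Luu)) G (0\<^sub>m n m)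
     (RuiT * Luu) (RuiT * (Luz - Luu * W)) (1\<^sub>m m)"
  define F where "F = block3 (0\<^sub>m m m) (0\<^sub>m m n) (transpose_mat Ru) (0\<^sub>m n m) B (transpose_mat Rz) Ru (0\<^sub>m m n) (0\<^sub>m m m)"
  define Finv where "Finv = block3 (0\<^sub>m m m) (0\<^sub>m m n) Ri (- (Bi * WT)) Bi (0\<^sub>m n m) RuiT (0\<^sub>m m n) (0\<^sub>m m m)"
  have KS_eq: "K * S = KS" unfolding K_def S_def KS_def
    apply (subst bm)
    apply (simp_all add: dims)
    apply (rule block3_cong)
    apply (simp_all add: RuW canc dims BG e4)
    apply ((simp_all add: WT_def assoc_dim dims)?)
    apply (auto intro!: eq_matI simp: dims)
    done
  have F_eq: "P2 * S = F" unfolding P2_def S_def F_def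
    apply (subst bm)
    apply (simp_all add: dims)
    apply (rule block3_cong)
    apply (simp_all add: RuW canc dims BG e4)
    apply ((simp_all add: WT_def assoc_dim dims)?)
    apply (auto intro!: eq_matI simp: dims)
    done
  have FT_eq: "F * T = KS" unfolding F_def T_def KS_def
    apply (subst bm)
    apply (simp_all add: dims)
    apply (rule block3_cong)
    apply (simp_all add: RuW canc dims BG e4)
    apply ((simp_all add: WT_def assoc_dim dims)?)
    apply (auto intro!: eq_matI simp: dims)
    done
  have FFinv: "F * Finv = 1\<^sub>m (m+n+m)" unfolding F_def Finv_def block3_one[symmetric]
    apply (subst bm)
    apply (simp_all add: dims)
    apply (rule block3_cong)
    apply (simp_all add: RuW canc dims BG e4)
    apply ((simp_all add: WT_def assoc_dim dims)?)
    apply (auto intro!: eq_matI simp: dims)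
    done
  have SSinv: "S * Sinv = 1\<^sub>m (m+n+m)" unfolding S_def Sinv_def block3_one[symmetric]
    apply (subst bm)
    apply (simp_all add: dims)
    apply (rule block3_cong)
    apply (simp_all add: RuW canc dims BG e4)
    apply ((simp_all add: WT_def assoc_dim dims)?)
    apply (auto intro!: eq_matI simp: dims)
    done
  let ?N = "m+n+m"
  have Kc: "K \<in> carrier_mat ?N ?N" unfolding K_def by (rule block3_carrier) auto
  have P2c: "P2 \<in> carrier_mat ?N ?N" unfolding P2_def by (rule block3_carrier) auto
  have Sc: "S \<in> carrier_mat ?N ?N" unfolding S_def by (rule block3_carrier) auto
  have Sinvc: "Sinv \<in> carrier_mat ?N ?N" unfolding Sinv_def by (rule block3_carrier) auto
  have Tc: "T \<in> carrier_mat ?N ?N" unfolding T_def by (rule block3_carrier) auto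
  have Fc: "F \<in> carrier_mat ?N ?N" unfolding F_def by (rule block3_carrier) auto
  have Finvc: "Finv \<in> carrier_mat ?N ?N" unfolding Finv_def by (rule block3_carrier) auto
  have "P2 * (S * Finv) = 1\<^sub>m ?N"
    using assoc_mult_mat[OF P2c Sc Finvc] F_eq FFinv by simp
  from minv_props[OF P2c _ this] Sc Finvc
  have mP2c: "minv P2 \<in> carrier_mat ?N ?N" and mP2: "minv P2 * P2 = 1\<^sub>m ?N" by auto
  define M where "M = minv P2 * K"
  have Mc: "M \<in> carrier_mat ?N ?N" unfolding M_def using mP2c Kc by simp
  have MS: "M * S = S * T"
  proof -
    have "M * S = minv P2 * (K * S)" unfolding M_def using assoc_mult_mat[OF mP2c Kc Sc] .
    also have "\<dots> = minv P2 * ((P2 * S) * T)" unfolding KS_eq F_eq FT_eq ..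
    also have "\<dots> = (minv P2 * P2) * (S * T)"
      using assoc_mult_mat[OF P2c Sc Tc] assoc_mult_mat[OF mP2c P2c, of "S * T" ?N] Sc Tc by simp
    also have "\<dots> = S * T" using mP2 Sc Tc by simp
    finally show ?thesis .
  qed
  have SinvS: "Sinv * S = 1\<^sub>m ?N" by (rule mat_mult_left_right_inverse[OF Sc Sinvc SSinv])
  have "M = S * T * Sinv"
  proof -
    have "M = M * (S * Sinv)" using SSinv Mc by simp
    also have "\<dots> = M * S * Sinv" using assoc_mult_mat[OF Mc Sc Sinvc] by simp
    finally show ?thesis unfolding MS .
  qed
  hence "similar_mat M T" using Mc Tc Sc Sinvc SSinv SinvS by (intro similar_matI[of M T S Sinv ?N]) (auto simp: assoc_mult_mat[OF Sc Tc Sinvc])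
  hence cpM: "char_poly M = [:-1,1:]^(2*m) * char_poly G"
    using char_poly_similar char_poly_T_lower[OF G ec(1) ec(2) ec(3)] unfolding T_def by metis
  define X where "X = Luz - Luu * W"
  have Xc[simp]: "X \<in> carrier_mat m n" unfolding X_def using dims by (auto intro!: carrier_matI)
  note dims = dims carrier_matD[OF Xc]
  have ec2[simp]: "Ri * (Rz - Rz * G) \<in> carrier_mat m n" "RuiT * (X - X * G) \<in> carrier_mat m n"
    "WT * (Luu * Ri) - Lzu * Ri \<in> carrier_mat n m" "Luu * Ri \<in> carrier_mat m m"
    "Ri * (Rz * Bi) \<in> carrier_mat m n" "RuiT * (X * Bi) \<in> carrier_mat m n" "Lzu * Ri \<in> carrier_mat n m"
    using dims by (auto intro!: carrier_matI)
  define K2p where "K2p = block3 Ru Rz (0\<^sub>m m m) (0\<^sub>m n m) H (0\<^sub>m n m) (0\<^sub>m m m) X (transpose_mat Ru)"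
  define Tp where "Tp = block3 (1\<^sub>m m) (Ri * (Rz - Rz * G)) (0\<^sub>m m m) (0\<^sub>m n m) G (0\<^sub>m n m) (0\<^sub>m m m) (RuiT * (X - X * G)) (1\<^sub>m m)"
  define K1inv where "K1inv = block3 (0\<^sub>m m m) (0\<^sub>m m n) (1\<^sub>m m) (- WT) (1\<^sub>m n) (WT * (Luu * Ri) - Lzu * Ri)
     (1\<^sub>m m) (0\<^sub>m m n) (- (Luu * Ri))"
  define K2inv where "K2inv = block3 Ri (- (Ri * (Rz * Bi))) (0\<^sub>m m m) (0\<^sub>m n m) Bi (0\<^sub>m n m) (0\<^sub>m m m) (- (RuiT * (X * Bi))) RuiT"
  have XK2: "Luz - Luu * Ri * Rz = X" unfolding X_def W_def
    by (simp add: assoc_mult_mat[OF Luu(1) Ri Rz])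
  have f1: "Luu * (Ri * Rz) + X = Luz" unfolding X_def W_def by (auto intro!: eq_matI simp: dims)
  have f2: "Lzu * (Ri * Rz) + H + transpose_mat Rz * (RuiT * X) = Lzz"
  proof -
    have c: "Lzu * W \<in> carrier_mat n n" "transpose_mat Rz * (RuiT * X) \<in> carrier_mat n n"
      using dims by (auto intro!: carrier_matI)
    have "Lzu * W + H + transpose_mat Rz * (RuiT * X) = Lzu * W + (H + transpose_mat Rz * (RuiT * X))"
      by (rule assoc_add_mat[OF c(1) H c(2)])
    also have "\<dots> = Lzu * W + (Lzz - Lzu * W)" using e4 unfolding X_def by simp
    also have "\<dots> = Lzz" by (auto intro!: eq_matI simp: dims)
    finally show ?thesis unfolding W_def .
  qed
  have K1K2p: "K1 * K2p = K" unfolding K1_def K2p_def K_def Ri_def[symmetric] WT_def[symmetric]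
    apply (subst bm)
    apply (simp_all add: dims)
    apply (rule block3_cong)
    apply (simp_all add: RuW canc dims BG e4)
    apply ((simp_all add: WT_def assoc_dim dims f1 f2)?)
    apply (auto intro!: eq_matI simp: dims X_def W_def)
    done
  have K2Tp: "K2 * Tp = K2p" unfolding K2_def K2p_def Tp_def Ri_def[symmetric] XK2
    apply (subst bm)
    apply (simp_all add: dims)
    apply (rule block3_cong)
    apply (simp_all add: RuW canc dims BG e4)
    apply ((simp_all add: WT_def assoc_dim dims)?)
    apply (auto intro!: eq_matI simp: dims)
    done
  have K1K1inv: "K1 * K1inv = 1\<^sub>m ?N" unfolding K1_def K1inv_def Ri_def[symmetric] WT_def[symmetric] block3_one[symmetric]
    apply (subst bm)
    apply (simp_all add: dims)
    apply (rule block3_cong)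
    apply (simp_all add: RuW canc dims BG e4)
    apply ((simp_all add: WT_def assoc_dim dims)?)
    apply (auto intro!: eq_matI simp: dims)
    done
  have K2K2inv: "K2 * K2inv = 1\<^sub>m ?N" unfolding K2_def K2inv_def Ri_def[symmetric] XK2 block3_one[symmetric]
    apply (subst bm)
    apply (simp_all add: dims)
    apply (rule block3_cong)
    apply (simp_all add: RuW canc dims BG e4)
    apply ((simp_all add: WT_def assoc_dim dims)?)
    apply (auto intro!: eq_matI simp: dims)
    done
  let ?C = "[:-1,1:]^(2*m) :: real poly"
  have K1c: "K1 \<in> carrier_mat ?N ?N" unfolding K1_def Ri_def[symmetric] by (rule block3_carrier) auto
  have K2c: "K2 \<in> carrier_mat ?N ?N" unfolding K2_def by (rule block3_carrier) auto
  have K1invc: "K1inv \<in> carrier_mat ?N ?N" unfolding K1inv_def by (rule block3_carrier) auto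
  have K2invc: "K2inv \<in> carrier_mat ?N ?N" unfolding K2inv_def by (rule block3_carrier) auto
  have Tpc: "Tp \<in> carrier_mat ?N ?N" unfolding Tp_def by (rule block3_carrier) auto
  have P4c: "P4 \<in> carrier_mat ?N ?N" unfolding P4_def using K1c K2c by simp
  have "P4 * (K2inv * K1inv) = 1\<^sub>m ?N"
  proof -
    have "P4 * (K2inv * K1inv) = K1 * (K2 * (K2inv * K1inv))" unfolding P4_def
      using assoc_mult_mat[OF K1c K2c, of "K2inv * K1inv" ?N] K2invc K1invc by simp
    also have "K2 * (K2inv * K1inv) = K1inv" using assoc_mult_mat[OF K2c K2invc K1invc] K2K2inv K1invc by simp
    finally show ?thesis using K1K1inv by simp
  qed
  from minv_props[OF P4c _ this] K2invc K1invc
  have mP4c: "minv P4 \<in> carrier_mat ?N ?N" and mP4: "minv P4 * P4 = 1\<^sub>m ?N" by auto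
  have M4: "minv P4 * K = Tp"
  proof -
    have "K = P4 * Tp" unfolding P4_def K1K2p[symmetric] K2Tp[symmetric]
      using assoc_mult_mat[OF K1c K2c Tpc] by simp
    hence "minv P4 * K = (minv P4 * P4) * Tp" using assoc_mult_mat[OF mP4c P4c Tpc] by simp
    thus ?thesis using mP4 Tpc by simp
  qed
  have cpT: "char_poly Tp = ?C * char_poly G"
    unfolding Tp_def by (rule char_poly_T_upper[OF G ec2(1) ec2(2)])
  have GG: "G = minv B * H" unfolding G_def Bi_def ..
  have cM: "char_poly (cmat M) = map_poly complex_of_real ?C * char_poly (cmat G)"
    unfolding of_real_hom.char_poly_hom[OF Mc] of_real_hom.char_poly_hom[OF G] cpM ofrp.hom_mult ..
  have cM4: "char_poly (cmat (minv P4 * K)) = map_poly complex_of_real ?C * char_poly (cmat G)"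
    unfolding M4 of_real_hom.char_poly_hom[OF Tpc] of_real_hom.char_poly_hom[OF G] cpT ofrp.hom_mult ..
  have mC: "map_poly complex_of_real ?C = [:-1,1:]^(2*m)" by (simp add: ofrp.hom_mult ofrp.hom_power)
  have NN: "2*m+n = ?N" by simp
  have cMc: "cmat M \<in> carrier_mat (2*m+n) (2*m+n)" unfolding NN using Mc by simp
  have cGc: "cmat G \<in> carrier_mat n n" using G by simp
  have part1: "\<forall>lam::complex. det (cmat M - lam \<cdot>\<^sub>m 1\<^sub>m (2*m+n))
            = (1 - lam) ^ (2*m) * det (cmat G - lam \<cdot>\<^sub>m 1\<^sub>m n)"
  proof
    fix lam :: complex
    have sq: "(lam - 1)^(2*m) = (1 - lam)^(2*m)" by (simp add: power_mult power2_commute)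
    have pC: "poly ([:-1,1:]^(2*m)) lam = (lam - 1)^(2*m)" by (simp add: poly_power)
    have "det (cmat M - lam \<cdot>\<^sub>m 1\<^sub>m (2*m+n)) = (-1)^(2*m+n) * poly (char_poly (cmat M)) lam"
      by (rule det_shift[OF cMc])
    also have "\<dots> = (-1)^(2*m+n) * ((lam - 1)^(2*m) * poly (char_poly (cmat G)) lam)"
      unfolding cM mC poly_mult pC ..
    also have "\<dots> = (1 - lam) ^ (2*m) * ((-1)^n * poly (char_poly (cmat G)) lam)"
      unfolding sq by (simp add: power_add)
    also have "\<dots> = (1 - lam) ^ (2*m) * det (cmat G - lam \<cdot>\<^sub>m 1\<^sub>m n)"
      unfolding det_shift[OF cGc] ..
    finally show "det (cmat M - lam \<cdot>\<^sub>m 1\<^sub>m (2*m+n)) = (1 - lam) ^ (2*m) * det (cmat G - lam \<cdot>\<^sub>m 1\<^sub>m n)" .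
  qed
  show ?thesis using part1 cM cM4 mC unfolding M_def GG by simp
qed


end
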